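(* Let $\mathcal{I}\in\mathrm{Ins}(\Omega,\mathcal{H},\mathcal{K})$ be an indecomposable instrument. Then a POVM $\mathsf{B}\in\mathcal{O}(\Lambda,\mathcal{H})$ is compatible with $\mathcal{I}$ if and only if $\mathsf{B}\preceq\mathsf{A}^{\mathcal{I}}$.
   Context: All Hilbert spaces are finite-dimensional and complex, and all outcome sets are finite. A POVM $\mathsf{A}\in\mathcal{O}(\Omega,\mathcal{H})$ is a map $x\mapsto\mathsf{A}(x)$ to positive operators with $\sum_x\mathsf{A}(x)=I$. For POVMs, $\mathsf{B}\preceq\mathsf{A}$ (with $\mathsf{B}\in\mathcal{O}(\Lambda,\mathcal{H})$, $\mathsf{A}\in\mathcal{O}(\Omega,\mathcal{H})$) means there is a stochastic matrix $(\nu_{xy})_{x\in\Omega,y\in\Lambda}$ ($\nu_{xy}\ge0$, $\sum_y\nu_{xy}=1$) with $\mathsf{B}(y)=\sum_x\nu_{xy}\mathsf{A}(x)$. An instrument $\mathcal{I}\in\mathrm{Ins}(\Omega,\mathcal{H},\mathcal{K})$ is a family $(\mathcal{I}_x)_{x\in\Omega}$ of completely positive trace-nonincreasing linear maps $\mathcal{L}(\mathcal{H})\to\mathcal{L}(\mathcal{K})$ whose sum is trace preserving; its induced POVM is given by $\mathrm{tr}[\mathsf{A}^{\mathcal{I}}(x)\varrho]=\mathrm{tr}[\mathcal{I}_x(\varrho)]$. $\mathcal{I}$ is indecomposable if each nonzero $\mathcal{I}_x$ has Kraus rank 1, i.e. $\mathcal{I}_x(\varrho)=K_x\varrho K_x^*$.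 An instrument $\mathcal{I}\in\mathrm{Ins}(\Omega,\mathcal{H},\mathcal{K})$ and a POVM $\mathsf{B}\in\mathcal{O}(\Lambda,\mathcal{H})$ are compatible if there is $\mathcal{G}\in\mathrm{Ins}(\Omega\times\Lambda,\mathcal{H},\mathcal{K})$ with $\sum_y\mathcal{G}_{(x,y)}=\mathcal{I}_x$ for all $x$ and $\sum_x\mathsf{A}^{\mathcal{G}}(x,y)=\mathsf{B}(y)$ for all $y$. *)

theory Defs
  imports Complex_Main "HOL-Library.Complex_Order"
begin

text \<open>Finite-dimensional Hilbert spaces are modelled as C^'h for a finite type 'h.
  Operators (matrices) from C^'b to C^'a are functions 'a => 'b => complex.\<close>

type_synonym ('a,'b) cmat = "'a \<Rightarrow> 'b \<Rightarrow> complex"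

definition mmult :: "('a,'b::finite) cmat \<Rightarrow> ('b,'c) cmat \<Rightarrow> ('a,'c) cmat" where
  "mmult M N = (\<lambda>i j. \<Sum>k\<in>UNIV. M i k * N k j)"

definition adj :: "('a,'b) cmat \<Rightarrow> ('b,'a) cmat" where
  "adj M = (\<lambda>i j. cnj (M j i))"

definition tr :: "('a::finite,'a) cmat \<Rightarrow> complex" where
  "tr M = (\<Sum>i\<in>UNIV. M i i)"

definition ident :: "('a,'a) cmat" where
  "ident = (\<lambda>i j. if i = j then 1 else 0)"

definition psd_on :: "'a set \<Rightarrow> ('a,'a) cmat \<Rightarrow> bool" where
  "psd_on S M \<longleftrightarrow> (\<forall>v :: 'a \<Rightarrow> complex. 0 \<le> (\<Sum>i\<in>S. \<Sum>j\<in>S. cnj (v i) * M i j * v j))"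

definition psd :: "('a::finite,'a) cmat \<Rightarrow> bool" where
  "psd M \<longleftrightarrow> psd_on UNIV M"

definition lin_map :: "(('a,'a) cmat \<Rightarrow> ('b,'b) cmat) \<Rightarrow> bool" where
  "lin_map \<Phi> \<longleftrightarrow> (\<forall>c X Y. \<Phi> (\<lambda>i j. c * X i j + Y i j) = (\<lambda>i j. c * \<Phi> X i j + \<Phi> Y i j))"

text \<open>Complete positivity: id_n (x) Phi is positive for every n, written with block
  matrices on the index set {..<n} x 'a (block (i,j) = operator on C^'a).\<close>
definition completely_positive :: "(('a::finite,'a) cmat \<Rightarrow> ('b::finite,'b) cmat) \<Rightarrow> bool" where
  "completely_positive \<Phi> \<longleftrightarrow> lin_map \<Phi> \<and>
     (\<forall>(n::nat) (X :: (nat \<times> 'a, nat \<times> 'a) cmat).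
        psd_on ({..<n} \<times> UNIV) X \<longrightarrow>
        psd_on ({..<n} \<times> UNIV)
          (\<lambda>(i,k) (j,l). \<Phi> (\<lambda>k' l'. X (i,k') (j,l')) k l))"

definition trace_nonincreasing :: "(('a::finite,'a) cmat \<Rightarrow> ('b::finite,'b) cmat) \<Rightarrow> bool" where
  "trace_nonincreasing \<Phi> \<longleftrightarrow> (\<forall>\<rho>. psd \<rho> \<longrightarrow> tr (\<Phi> \<rho>) \<le> tr \<rho>)"

definition is_povm :: "('x::finite \<Rightarrow> ('a::finite,'a) cmat) \<Rightarrow> bool" where
  "is_povm A \<longleftrightarrow> (\<forall>x. psd (A x)) \<and> (\<lambda>i j. \<Sum>x\<in>UNIV. A x i j) = ident"

definition is_instrument :: "('x::finite \<Rightarrow> ('a::finite,'a) cmat \<Rightarrow> ('b::finite,'b) cmat) \<Rightarrow> bool" where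
  "is_instrument I \<longleftrightarrow> (\<forall>x. completely_positive (I x) \<and> trace_nonincreasing (I x)) \<and>
     (\<forall>\<rho>. tr (\<lambda>i j. \<Sum>x\<in>UNIV. I x \<rho> i j) = tr \<rho>)"

definition induced_povm :: "('x \<Rightarrow> ('a::finite,'a) cmat \<Rightarrow> ('b::finite,'b) cmat) \<Rightarrow> 'x \<Rightarrow> ('a,'a) cmat" where
  "induced_povm I x = (THE A. \<forall>\<rho>. tr (mmult A \<rho>) = tr (I x \<rho>))"

definition indecomposable :: "('x \<Rightarrow> ('a::finite,'a) cmat \<Rightarrow> ('b::finite,'b) cmat) \<Rightarrow> bool" where
  "indecomposable I \<longleftrightarrow> (\<forall>x. I x \<noteq> (\<lambda>\<rho>. (\<lambda>i j. 0)) \<longrightarrow>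
      (\<exists>K :: ('b,'a) cmat. \<forall>\<rho>. I x \<rho> = mmult (mmult K \<rho>) (adj K)))"

definition postproc_le :: "('y::finite \<Rightarrow> ('a,'a) cmat) \<Rightarrow> ('x::finite \<Rightarrow> ('a,'a) cmat) \<Rightarrow> bool" where
  "postproc_le B A \<longleftrightarrow> (\<exists>\<nu> :: 'x \<Rightarrow> 'y \<Rightarrow> real.
     (\<forall>x y. 0 \<le> \<nu> x y) \<and> (\<forall>x. (\<Sum>y\<in>UNIV. \<nu> x y) = 1) \<and>
     (\<forall>y. B y = (\<lambda>i j. \<Sum>x\<in>UNIV. complex_of_real (\<nu> x y) * A x i j)))"

definition compatible ::
  "('x::finite \<Rightarrow> ('a::finite,'a) cmat \<Rightarrow> ('b::finite,'b) cmat) \<Rightarrow> ('y::finite \<Rightarrow> ('a,'a) cmat) \<Rightarrow> bool" where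
  "compatible I B \<longleftrightarrow> (\<exists>G :: 'x \<times> 'y \<Rightarrow> ('a,'a) cmat \<Rightarrow> ('b,'b) cmat.
     is_instrument G \<and>
     (\<forall>x. (\<lambda>\<rho> i j. \<Sum>y\<in>UNIV. G (x,y) \<rho> i j) = I x) \<and>
     (\<forall>y. (\<lambda>i j. \<Sum>x\<in>UNIV. induced_povm G (x,y) i j) = B y))"

end

theory Submission
  imports Defs
begin

definition bf :: "('i::finite \<Rightarrow> 'i \<Rightarrow> complex) \<Rightarrow> ('i \<Rightarrow> complex) \<Rightarrow> ('i \<Rightarrow> complex) \<Rightarrow> complex" where
 "bf M w u = (\<Sum>i\<in>UNIV. \<Sum>j\<in>UNIV. cnj (w i) * M i j * u j)"
definition ipv :: "('i::finite \<Rightarrow> complex) \<Rightarrow> ('i \<Rightarrow> complex) \<Rightarrow> complex" where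
 "ipv V w = (\<Sum>i\<in>UNIV. cnj (w i) * V i)"

lemma bf_left: "bf M (\<lambda>i. x i + c * y i) u = bf M x u + cnj c * bf M y u"
  unfolding bf_def by (simp add: algebra_simps sum.distrib sum_distrib_left)
lemma bf_right: "bf M w (\<lambda>i. x i + c * y i) = bf M w x + c * bf M w y"
  unfolding bf_def by (simp add: algebra_simps sum.distrib sum_distrib_left)
lemma ipv_add: "ipv V (\<lambda>i. x i + c * y i) = ipv V x + cnj c * ipv V y"
  unfolding ipv_def by (simp add: algebra_simps sum.distrib sum_distrib_left)

lemma lin_nonneg_zero:
  fixes a c :: real
  assumes "\<forall>r. 0 \<le> r * a + c" shows "a = 0"
proof (rule ccontr)
  assume "a \<noteq> 0"
  have "0 \<le> (-(\<bar>c\<bar>+1)/a) * a + c" using assms by blast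
  also have "\<dots> = -(\<bar>c\<bar>+1) + c" using \<open>a \<noteq> 0\<close> by simp
  finally show False by linarith
qed

lemma key_zero:
  assumes "\<forall>s::complex. 0 \<le> cnj s * b1 + s * b2 + c" shows "b1 = 0 \<and> b2 = 0"
proof -
  have R: "0 \<le> r * (Re b1 + Re b2) + Re c \<and> r * (Im b1 + Im b2) + Im c = 0" for r
    using assms[rule_format, of "complex_of_real r"] by (simp add: less_eq_complex_def algebra_simps)
  have I: "0 \<le> r * (Im b1 - Im b2) + Re c \<and> r * (Re b2 - Re b1) + Im c = 0" for r
    using assms[rule_format, of "\<i> * complex_of_real r"] by (simp add: less_eq_complex_def algebra_simps)
  have 1: "Re b1 + Re b2 = 0" by (rule lin_nonneg_zero) (use R in blast)
  have 2: "Im b1 - Im b2 = 0" by (rule lin_nonneg_zero) (use I in blast)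
  have 3: "Im b1 + Im b2 = 0" using R[of 1] R[of 0] by simp
  have 4: "Re b2 - Re b1 = 0" using I[of 1] I[of 0] by simp
  show ?thesis using 1 2 3 4 by (simp add: complex_eq_iff)
qed

lemma sum_if_const: "(\<Sum>x\<in>A. if P then f x else 0) = (if P then sum f A else 0)"
  by simp

lemma bf_delta: "bf M (\<lambda>k. if k = i then 1 else 0) (\<lambda>k. if k = j then 1 else 0) = M i j"
  unfolding bf_def by (simp add: mult_ac if_distrib[of cnj] if_distrib[of "\<lambda>x. x * _"] if_distrib[of "\<lambda>x. _ * x"] sum_if_const cong: if_cong)

lemma ipv_delta: "ipv V (\<lambda>k. if k = i then 1 else 0) = V i"
  unfolding ipv_def by (simp add: if_distrib[of cnj] if_distrib[of "\<lambda>x. x * _"] cong: if_cong)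

lemma rank1_dom:
  fixes M :: "'i::finite \<Rightarrow> 'i \<Rightarrow> complex" and V :: "'i \<Rightarrow> complex"
  assumes pos: "\<forall>w. 0 \<le> bf M w w"
    and dom: "\<forall>w. bf M w w \<le> ipv V w * cnj (ipv V w)"
  shows "\<exists>t::real. 0 \<le> t \<and> (\<forall>i j. M i j = complex_of_real t * V i * cnj (V j))"
proof -
  have orth: "bf M w u = 0 \<and> bf M u w = 0" if "ipv V w = 0" for w u
  proof -
    have "bf M w w \<le> 0" using dom that by (metis mult_zero_left)
    moreover have "0 \<le> bf M w w" using pos by blast
    ultimately have "bf M w w = 0" by (rule antisym)
    have "0 \<le> cnj s * bf M w u + s * bf M u w + bf M u u" for s
    proof -
      have "bf M (\<lambda>i. u i + s * w i) (\<lambda>i. u i + s * w i)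
          = bf M u u + s * bf M u w + cnj s * (bf M w u + s * bf M w w)"
        by (simp add: bf_left bf_right)
      moreover have "0 \<le> bf M (\<lambda>i. u i + s * w i) (\<lambda>i. u i + s * w i)" using pos by blast
      ultimately show ?thesis using \<open>bf M w w = 0\<close> by (simp add: algebra_simps)
    qed
    then show ?thesis using key_zero by blast
  qed
  show ?thesis
  proof (cases "\<forall>i. V i = 0")
    case True
    have "ipv V w = 0" for w using True by (simp add: ipv_def)
    then have "M i j = 0" for i j using orth bf_delta by metis
    then show ?thesis using True by (intro exI[of _ 0]) auto
  next
    case False
    define nr where "nr = (\<Sum>i\<in>UNIV. (cmod (V i))^2)"
    have nV: "ipv V V = complex_of_real nr"
      unfolding ipv_def nr_def of_real_sum of_real_power
      by (rule sum.cong) (auto, metis complex_norm_square mult.commute of_real_power)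
    have "nr > 0"
    proof -
      obtain i where "V i \<noteq> 0" using False by blast
      have "(cmod (V i))^2 \<le> nr" unfolding nr_def
        by (rule member_le_sum) auto
      moreover have "(cmod (V i))^2 > 0" using \<open>V i \<noteq> 0\<close> by simp
      ultimately show ?thesis by linarith
    qed
    define n where "n = complex_of_real nr"
    have n0: "n \<noteq> 0" using \<open>nr > 0\<close> by (simp add: n_def)
    have cn: "cnj n = n" by (simp add: n_def)
    have decomp: "bf M w u = ipv V w / n * (cnj (ipv V u) / n) * bf M V V" for w u
    proof -
      define \<alpha> where "\<alpha> = cnj (ipv V w) / n"
      define w' where "w' = (\<lambda>i. w i + (- \<alpha>) * V i)"
      have "ipv V w' = ipv V w - cnj \<alpha> * n" unfolding w'_def ipv_add by (simp add: nV n_def)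
      also have "\<dots> = 0" using n0 cn by (simp add: \<alpha>_def)
      finally have w'0: "ipv V w' = 0" .
      have w: "w = (\<lambda>i. w' i + \<alpha> * V i)" by (simp add: w'_def)
      define \<beta> where "\<beta> = cnj (ipv V u) / n"
      define u' where "u' = (\<lambda>i. u i + (- \<beta>) * V i)"
      have "ipv V u' = ipv V u - cnj \<beta> * n" unfolding u'_def ipv_add by (simp add: nV n_def)
      also have "\<dots> = 0" using n0 cn by (simp add: \<beta>_def)
      finally have u'0: "ipv V u' = 0" .
      have u: "u = (\<lambda>i. u' i + \<beta> * V i)" by (simp add: u'_def)
      have "bf M w u = cnj \<alpha> * bf M V u"
        using orth[OF w'0, of u] by (subst w) (simp add: bf_left)
      also have "bf M V u = \<beta> * bf M V V"
        using orth[OF u'0, of V] by (subst u) (simp add: bf_right)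
      finally show ?thesis using cn by (simp add: \<alpha>_def \<beta>_def)
    qed
    have bVV: "bf M V V = complex_of_real (Re (bf M V V))"
      using pos by (simp add: less_eq_complex_def complex_eq_iff)
    have r0: "Re (bf M V V) \<ge> 0" using pos by (simp add: less_eq_complex_def)
    define t where "t = Re (bf M V V) / (nr * nr)"
    have t0: "0 \<le> t" using r0 \<open>nr > 0\<close> by (simp add: t_def)
    have "M i j = t * V i * cnj (V j)" for i j
    proof -
      have "M i j = bf M (\<lambda>k. if k = i then 1 else 0) (\<lambda>k. if k = j then 1 else 0)"
        by (simp add: bf_delta)
      also have "\<dots> = V i / n * (cnj (V j) / n) * bf M V V"
        by (subst decomp) (simp add: ipv_delta)
      also have "\<dots> = t * V i * cnj (V j)"
      proof -
        have "complex_of_real t = complex_of_real (Re (bf M V V)) / (n * n)" by (simp add: t_def n_def)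
        then show ?thesis by (subst bVV) (simp add: mult_ac)
      qed
      finally show "M i j = t * V i * cnj (V j)" .
    qed
    then show ?thesis using t0 by blast
  qed
qed

definition eunit :: "'a \<Rightarrow> 'b \<Rightarrow> ('a,'b) cmat" where
  "eunit a b = (\<lambda>i j. if i = a \<and> j = b then 1 else 0)"

lemma lin_zero: "lin_map \<Phi> \<Longrightarrow> \<Phi> (\<lambda>i j. 0) = (\<lambda>i j. 0)"
  unfolding lin_map_def by (erule allE[of _ "-1"], erule allE[of _ "\<lambda>i j. 0"], erule allE[of _ "\<lambda>i j. 0"]) simp

lemma lin_sum:
  assumes "lin_map \<Phi>" "finite S"
  shows "\<Phi> (\<lambda>i j. \<Sum>s\<in>S. c s * X s i j) = (\<lambda>i j. \<Sum>s\<in>S. c s * \<Phi> (X s) i j)"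
  using assms(2)
proof (induction S rule: finite_induct)
  case empty then show ?case using lin_zero[OF assms(1)] by simp
next
  case (insert s S)
  have "\<Phi> (\<lambda>i j. \<Sum>s\<in>insert s S. c s * X s i j) = \<Phi> (\<lambda>i j. c s * X s i j + (\<Sum>s\<in>S. c s * X s i j))"
    using insert by simp
  also have "\<dots> = (\<lambda>i j. c s * \<Phi> (X s) i j + \<Phi> (\<lambda>i j. \<Sum>s\<in>S. c s * X s i j) i j)"
    using assms(1)[unfolded lin_map_def, rule_format, of "c s" "X s" "\<lambda>i j. \<Sum>s\<in>S. c s * X s i j"] by simp
  also have "\<dots> = (\<lambda>i j. \<Sum>s\<in>insert s S. c s * \<Phi> (X s) i j)"
    using insert by simp
  finally show ?case .
qed

lemma mat_expand: "(\<rho> :: ('a::finite,'b::finite) cmat) = (\<lambda>i j. \<Sum>p\<in>UNIV. \<rho> (fst p) (snd p) * eunit (fst p) (snd p) i j)"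
proof (intro ext)
  fix i j
  have "(\<Sum>p\<in>UNIV. \<rho> (fst p) (snd p) * eunit (fst p) (snd p) i j) = (\<Sum>p\<in>UNIV. if p = (i,j) then \<rho> i j else 0)"
    by (rule sum.cong) (auto simp: eunit_def)
  also have "\<dots> = \<rho> i j" by simp
  finally show "\<rho> i j = (\<Sum>p\<in>UNIV. \<rho> (fst p) (snd p) * eunit (fst p) (snd p) i j)" by simp
qed

lemma lin_expand:
  fixes \<Phi> :: "('a::finite,'a) cmat \<Rightarrow> ('b,'b) cmat"
  assumes "lin_map \<Phi>"
  shows "\<Phi> \<rho> = (\<lambda>k l. \<Sum>p\<in>UNIV. \<rho> (fst p) (snd p) * \<Phi> (eunit (fst p) (snd p)) k l)"
proof -
  have "\<Phi> \<rho> = \<Phi> (\<lambda>i j. \<Sum>p\<in>UNIV. \<rho> (fst p) (snd p) * eunit (fst p) (snd p) i j)"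
    by (rule arg_cong[where f=\<Phi>], rule mat_expand)
  also have "\<dots> = (\<lambda>k l. \<Sum>p\<in>UNIV. \<rho> (fst p) (snd p) * \<Phi> (eunit (fst p) (snd p)) k l)"
    by (rule lin_sum[OF assms finite_UNIV])
  finally show ?thesis .
qed

lemma tr_mmult_eunit: "tr (mmult A (eunit j i)) = A i j"
proof -
  have "tr (mmult A (eunit j i)) = (\<Sum>a\<in>UNIV. if a = i then A i j else 0)"
    unfolding tr_def mmult_def eunit_def
    by (rule sum.cong) (auto simp: if_distrib[of "\<lambda>x. _ * x"] cong: if_cong)
  then show ?thesis by simp
qed

lemma induced_unique:
  assumes "\<forall>\<rho>. tr (mmult A \<rho>) = tr (I x \<rho>)"
  shows "induced_povm I x = A"
  unfolding induced_povm_def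
proof (rule the_equality)
  show "\<forall>\<rho>. tr (mmult A \<rho>) = tr (I x \<rho>)" by fact
  fix A' assume "\<forall>\<rho>. tr (mmult A' \<rho>) = tr (I x \<rho>)"
  then have "tr (mmult A' (eunit j i)) = tr (mmult A (eunit j i))" for i j using assms by simp
  then show "A' = A" by (intro ext) (simp add: tr_mmult_eunit)
qed

lemma induced_exists:
  assumes "lin_map (I x)"
  shows "tr (mmult (induced_povm I x) \<rho>) = tr (I x \<rho>)"
proof -
  define A where "A = (\<lambda>i j. tr (I x (eunit j i)))"
  have "tr (mmult A \<rho>) = tr (I x \<rho>)" for \<rho>
  proof -
    have "tr (I x \<rho>) = (\<Sum>m\<in>UNIV. \<Sum>p\<in>UNIV. \<rho> (fst p) (snd p) * I x (eunit (fst p) (snd p)) m m)"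
      unfolding tr_def by (subst lin_expand[OF assms]) simp
    also have "\<dots> = (\<Sum>p\<in>UNIV. \<rho> (fst p) (snd p) * tr (I x (eunit (fst p) (snd p))))"
      unfolding tr_def by (subst sum.swap) (simp add: sum_distrib_left)
    also have "\<dots> = (\<Sum>k\<in>UNIV. \<Sum>i\<in>UNIV. \<rho> k i * tr (I x (eunit k i)))"
      by (simp add: sum.cartesian_product UNIV_Times_UNIV[symmetric] case_prod_beta del: UNIV_Times_UNIV)
    also have "\<dots> = tr (mmult A \<rho>)"
      unfolding tr_def mmult_def A_def by (subst sum.swap) (simp add: mult.commute)
    finally show ?thesis by simp
  qed
  then have "induced_povm I x = A" by (intro induced_unique) blast
  then show ?thesis using \<open>tr (mmult A \<rho>) = tr (I x \<rho>)\<close> by simp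
qed

lemma cnj_mult_self_nonneg: "0 \<le> cnj z * (z::complex)"
  by (simp add: less_eq_complex_def)

lemma cp_choi:
  fixes \<Phi> :: "('h::finite,'h) cmat \<Rightarrow> ('k::finite,'k) cmat" and w :: "'h \<times> 'k \<Rightarrow> complex"
  assumes "completely_positive \<Phi>"
  shows "0 \<le> bf (\<lambda>p q. \<Phi> (eunit (fst p) (fst q)) (snd p) (snd q)) w w"
proof -
  define n where "n = card (UNIV::'h set)"
  obtain h where h: "bij_betw h {..<n} (UNIV::'h set)"
    using ex_bij_betw_nat_finite[of "UNIV::'h set"] by (auto simp: atLeast0LessThan n_def)
  define X :: "(nat \<times> 'h, nat \<times> 'h) cmat" where
    "X = (\<lambda>p q. if snd p = h (fst p) \<and> snd q = h (fst q) then 1 else 0)"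
  have Xpsd: "psd_on ({..<n} \<times> UNIV) X"
    unfolding psd_on_def
  proof
    fix v :: "nat \<times> 'h \<Rightarrow> complex"
    define S where "S = (\<Sum>q\<in>{..<n}\<times>UNIV. if snd q = h (fst q) then v q else 0)"
    have "(\<Sum>p\<in>{..<n}\<times>UNIV. \<Sum>q\<in>{..<n}\<times>UNIV. cnj (v p) * X p q * v q)
        = (\<Sum>p\<in>{..<n}\<times>UNIV. if snd p = h (fst p) then cnj (v p) else 0) * S"
      unfolding S_def sum_product by (intro sum.cong refl) (auto simp: X_def)
    also have "\<dots> = cnj S * S" unfolding S_def cnj_sum
      by (simp add: if_distrib[of cnj] cong: if_cong)
    finally show "0 \<le> (\<Sum>p\<in>{..<n}\<times>UNIV. \<Sum>q\<in>{..<n}\<times>UNIV. cnj (v p) * X p q * v q)"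
      using cnj_mult_self_nonneg by simp
  qed
  have blk: "(\<lambda>k' l'. X (i,k') (j,l')) = eunit (h i) (h j)" for i j
    by (auto simp: X_def eunit_def)
  have "psd_on ({..<n} \<times> UNIV) (\<lambda>(i,k) (j,l). \<Phi> (\<lambda>k' l'. X (i,k') (j,l')) k l)"
    using assms Xpsd unfolding completely_positive_def by blast
  then have "psd_on ({..<n} \<times> UNIV) (\<lambda>(i,k) (j,l). \<Phi> (eunit (h i) (h j)) k l)"
    by (simp add: blk)
  then have P: "0 \<le> (\<Sum>p\<in>{..<n}\<times>UNIV. \<Sum>q\<in>{..<n}\<times>UNIV.
      cnj (w (map_prod h id p)) * \<Phi> (eunit (fst (map_prod h id p)) (fst (map_prod h id q)))
         (snd (map_prod h id p)) (snd (map_prod h id q)) * w (map_prod h id q))"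
    unfolding psd_on_def by (auto simp: split_beta elim!: allE[of _ "\<lambda>p. w (h (fst p), snd p)"])
  have g: "bij_betw (map_prod h id) ({..<n} \<times> UNIV) (UNIV :: ('h \<times> 'k) set)"
    using bij_betw_map_prod[OF h bij_betw_id[of "UNIV::'k set"]] by simp
  define F where "F = (\<lambda>p q. cnj (w p) * \<Phi> (eunit (fst p) (fst q)) (snd p) (snd q) * w q)"
  have inner: "(\<Sum>q\<in>{..<n}\<times>UNIV. F x (map_prod h id q)) = (\<Sum>q\<in>UNIV. F x q)" for x
    using sum.reindex_bij_betw[OF g, of "F x"] by simp
  have "(\<Sum>p\<in>{..<n}\<times>UNIV. \<Sum>q\<in>{..<n}\<times>UNIV. F (map_prod h id p) (map_prod h id q))
      = (\<Sum>p\<in>UNIV. \<Sum>q\<in>UNIV. F p q)"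
    unfolding inner using sum.reindex_bij_betw[OF g, of "\<lambda>p. \<Sum>q\<in>UNIV. F p q"] by simp
  then show ?thesis
    using P unfolding bf_def F_def by simp
qed

lemma bf_rank1: "bf (\<lambda>i j. V i * cnj (V j)) w u = ipv V w * cnj (ipv V u)"
  unfolding bf_def ipv_def cnj_sum sum_product by (intro sum.cong refl) (simp add: mult_ac)

lemma kraus_eunit: "mmult (mmult K (eunit a b)) (adj K) k l = K k a * cnj (K l b)"
proof -
  have "mmult K (eunit a b) k m = (if m = b then K k a else 0)" for m
    unfolding mmult_def eunit_def
    by (simp add: if_distrib[of "\<lambda>x. _ * x"] cong: if_cong)
  then show ?thesis unfolding mmult_def[of "mmult K (eunit a b)"]
    by (simp add: adj_def if_distrib[of "\<lambda>x. x * _"] cong: if_cong)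
qed

lemma bf_sum: "bf (\<lambda>p q. \<Sum>y\<in>A. M y p q) w u = (\<Sum>y\<in>A. bf (M y) w u)"
  unfolding bf_def by (simp add: sum_distrib_left sum_distrib_right sum.swap[of _ A])

lemma tr_scale: "tr (\<lambda>i j. c * A i j) = c * tr A"
  unfolding tr_def by (simp add: sum_distrib_left)

lemma mmult_scale: "mmult (\<lambda>i j. c * A i j) B = (\<lambda>i j. c * mmult A B i j)"
  unfolding mmult_def by (simp add: sum_distrib_left mult_ac)

lemma kraus_tr_nonneg:
  assumes "psd \<rho>"
  shows "0 \<le> tr (mmult (mmult K \<rho>) (adj K))"
proof -
  have "tr (mmult (mmult K \<rho>) (adj K)) =
    (\<Sum>k\<in>UNIV. \<Sum>a\<in>UNIV. \<Sum>m\<in>UNIV. cnj (cnj (K k a)) * \<rho> a m * cnj (K k m))"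
    unfolding tr_def mmult_def adj_def by (rule sum.cong[OF refl]) (simp add: sum_distrib_right, rule sum.swap)
  also have "0 \<le> \<dots>"
  proof (rule sum_nonneg)
    fix k
    show "0 \<le> (\<Sum>a\<in>UNIV. \<Sum>m\<in>UNIV. cnj (cnj (K k a)) * \<rho> a m * cnj (K k m))"
      using assms[unfolded psd_def psd_on_def, rule_format, of "\<lambda>a. cnj (K k a)"] by simp
  qed
  finally show ?thesis by simp
qed

lemma scale_le: "0 \<le> T \<Longrightarrow> 0 \<le> c \<Longrightarrow> c \<le> 1 \<Longrightarrow> complex_of_real c * T \<le> (T::complex)"
  by (auto simp: less_eq_complex_def mult_left_le_one_le)

lemma scaled_cp:
  assumes "completely_positive \<Phi>" "0 \<le> c"
  shows "completely_positive (\<lambda>\<rho> i j. complex_of_real c * \<Phi> \<rho> i j)"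
  unfolding completely_positive_def
proof (intro conjI allI impI)
  have L: "lin_map \<Phi>" using assms(1) completely_positive_def by blast
  show "lin_map (\<lambda>\<rho> i j. complex_of_real c * \<Phi> \<rho> i j)"
    unfolding lin_map_def
  proof (intro allI)
    fix d X Y
    show "(\<lambda>i j. complex_of_real c * \<Phi> (\<lambda>i j. d * X i j + Y i j) i j) =
       (\<lambda>i j. d * (complex_of_real c * \<Phi> X i j) + complex_of_real c * \<Phi> Y i j)"
      using L[unfolded lin_map_def, rule_format, of d X Y] by (simp add: algebra_simps)
  qed
  fix n and X :: "(nat \<times> 'a, nat \<times> 'a) cmat"
  assume "psd_on ({..<n} \<times> UNIV) X"
  then have H: "psd_on ({..<n} \<times> UNIV) (\<lambda>(i,k) (j,l). \<Phi> (\<lambda>k' l'. X (i,k') (j,l')) k l)"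
    using assms(1) completely_positive_def by blast
  show "psd_on ({..<n} \<times> UNIV) (\<lambda>(i,k) (j,l). complex_of_real c * \<Phi> (\<lambda>k' l'. X (i,k') (j,l')) k l)"
    unfolding psd_on_def
  proof
    fix v :: "nat \<times> 'b \<Rightarrow> complex"
    have e: "(\<Sum>p\<in>{..<n} \<times> UNIV. \<Sum>q\<in>{..<n} \<times> UNIV. cnj (v p) *
        (case p of (i,k) \<Rightarrow> \<lambda>(j,l). complex_of_real c * \<Phi> (\<lambda>k' l'. X (i,k') (j,l')) k l) q * v q)
      = complex_of_real c * (\<Sum>p\<in>{..<n} \<times> UNIV. \<Sum>q\<in>{..<n} \<times> UNIV. cnj (v p) *
        (case p of (i,k) \<Rightarrow> \<lambda>(j,l). \<Phi> (\<lambda>k' l'. X (i,k') (j,l')) k l) q * v q)"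
      unfolding sum_distrib_left by (intro sum.cong refl) (simp add: split_beta mult.assoc mult.left_commute)
    have "0 \<le> complex_of_real c" using assms(2) by (simp add: less_eq_complex_def)
    moreover have "0 \<le> (\<Sum>p\<in>{..<n} \<times> UNIV. \<Sum>q\<in>{..<n} \<times> UNIV. cnj (v p) *
        (case p of (i,k) \<Rightarrow> \<lambda>(j,l). \<Phi> (\<lambda>k' l'. X (i,k') (j,l')) k l) q * v q)"
      using H unfolding psd_on_def by blast
    ultimately show "0 \<le> (\<Sum>p\<in>{..<n} \<times> UNIV. \<Sum>q\<in>{..<n} \<times> UNIV. cnj (v p) *
        (case p of (i,k) \<Rightarrow> \<lambda>(j,l). complex_of_real c * \<Phi> (\<lambda>k' l'. X (i,k') (j,l')) k l) q * v q)"
      unfolding e by (rule mult_nonneg_nonneg)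
  qed
qed

lemma scaled_induced:
  assumes "lin_map (I x)" "G p = (\<lambda>\<rho> i j. complex_of_real c * I x \<rho> i j)"
  shows "induced_povm G p = (\<lambda>i j. complex_of_real c * induced_povm I x i j)"
proof (rule induced_unique, intro allI)
  fix \<rho>
  show "tr (mmult (\<lambda>i j. complex_of_real c * induced_povm I x i j) \<rho>) = tr (G p \<rho>)"
    using induced_exists[where I=I and x=x, OF assms(1), of \<rho>] assms(2)
    by (simp add: mmult_scale tr_scale)
qed

theorem corollary7:
  fixes I :: "'x::finite \<Rightarrow> ('h::finite,'h) cmat \<Rightarrow> ('k::finite,'k) cmat"
    and B :: "'y::finite \<Rightarrow> ('h,'h) cmat"
  assumes "is_instrument I"
    and "indecomposable I"
    and "is_povm B"
  shows "compatible I B \<longleftrightarrow> postproc_le B (induced_povm I)"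
proof -
  have cpI: "completely_positive (I x)" for x using assms(1) is_instrument_def by blast
  have linI: "lin_map (I x)" for x using cpI completely_positive_def by blast
  have "\<exists>K :: ('k,'h) cmat. \<forall>\<rho>. I x \<rho> = mmult (mmult K \<rho>) (adj K)" for x
  proof (cases "I x = (\<lambda>\<rho>. (\<lambda>i j. 0))")
    case True
    have "mmult (mmult ((\<lambda>i j. 0) :: ('k,'h) cmat) \<rho>) (adj ((\<lambda>i j. 0) :: ('k,'h) cmat)) = (\<lambda>i j. 0 :: complex)" for \<rho> :: "('h,'h) cmat"
      by (simp add: mmult_def adj_def)
    then show ?thesis using True by (intro exI[of _ "\<lambda>i j. 0"]) simp
  next
    case False
    show ?thesis using assms(2)[unfolded indecomposable_def, rule_format, OF False] .
  qed
  then have "\<forall>x. \<exists>K :: ('k,'h) cmat. \<forall>\<rho>. I x \<rho> = mmult (mmult K \<rho>) (adj K)" by blast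
  then have "\<exists>Kf :: 'x \<Rightarrow> ('k,'h) cmat. \<forall>x. \<forall>\<rho>. I x \<rho> = mmult (mmult (Kf x) \<rho>) (adj (Kf x))"
    by (rule choice)
  then obtain Kf :: "'x \<Rightarrow> ('k,'h) cmat" where Kf0: "\<forall>x. \<forall>\<rho>. I x \<rho> = mmult (mmult (Kf x) \<rho>) (adj (Kf x))"
    by blast
  have Kf: "\<And>x \<rho>. I x \<rho> = mmult (mmult (Kf x) \<rho>) (adj (Kf x))" using Kf0 by blast
  have IE: "I x (eunit a b) k l = Kf x k a * cnj (Kf x l b)" for x a b k l
    by (simp only: Kf kraus_eunit)
  have trI: "0 \<le> tr (I x \<rho>)" if "psd \<rho>" for x \<rho>
    unfolding Kf by (rule kraus_tr_nonneg[OF that])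
  show ?thesis
  proof
    assume "compatible I B"
    then obtain G :: "'x \<times> 'y \<Rightarrow> ('h,'h) cmat \<Rightarrow> ('k,'k) cmat" where
      instG: "is_instrument G" and
      marg: "\<And>x. (\<lambda>\<rho> i j. \<Sum>y\<in>UNIV. G (x,y) \<rho> i j) = I x" and
      povm: "\<And>y. (\<lambda>i j. \<Sum>x\<in>UNIV. induced_povm G (x,y) i j) = B y"
      unfolding compatible_def by blast
    have cpG: "completely_positive (G p)" for p using instG is_instrument_def by blast
    have linG: "lin_map (G p)" for p using cpG completely_positive_def by blast
    have exT: "\<exists>t::real. 0 \<le> t \<and> G (x,y) = (\<lambda>\<rho> i j. complex_of_real t * I x \<rho> i j)" for x y
    proof -
      define M where "M y' = (\<lambda>p q. G (x,y') (eunit (fst p) (fst q)) (snd p) (snd q))" for y'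
      define V where "V = (\<lambda>p::'h\<times>'k. Kf x (snd p) (fst p))"
      have pos: "0 \<le> bf (M y') w w" for y' w
        unfolding M_def by (rule cp_choi[OF cpG])
      have dom: "bf (M y) w w \<le> ipv V w * cnj (ipv V w)" for w
      proof -
        have IxE: "I x \<rho> k l = (\<Sum>y'\<in>UNIV. G (x,y') \<rho> k l)" for \<rho> k l
          by (subst marg[of x, symmetric]) (rule refl)
        have "ipv V w * cnj (ipv V w) = bf (\<lambda>p q. V p * cnj (V q)) w w"
          by (rule bf_rank1[symmetric])
        also have "(\<lambda>p q. V p * cnj (V q)) = (\<lambda>p q. \<Sum>y'\<in>UNIV. M y' p q)"
          by (intro ext) (simp add: V_def M_def IE[symmetric] IxE)
        also have "bf (\<lambda>p q. \<Sum>y'\<in>UNIV. M y' p q) w w = (\<Sum>y'\<in>UNIV. bf (M y') w w)"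
          by (rule bf_sum)
        also have "\<dots> = bf (M y) w w + (\<Sum>y'\<in>UNIV - {y}. bf (M y') w w)"
          by (rule sum.remove) auto
        finally show ?thesis using sum_nonneg[of "UNIV - {y}" "\<lambda>y'. bf (M y') w w"] pos
          by (simp add: add_increasing2)
      qed
      obtain t where t0: "0 \<le> t" and Mt: "\<And>p q. M y p q = complex_of_real t * V p * cnj (V q)"
        using rank1_dom[of "M y" V] pos dom by blast
      have GE: "G (x,y) (eunit a b) k l = complex_of_real t * I x (eunit a b) k l" for a b k l
        using Mt[of "(a,k)" "(b,l)"] by (simp add: M_def V_def IE mult.assoc)
      have "G (x,y) \<rho> = (\<lambda>i j. complex_of_real t * I x \<rho> i j)" for \<rho>
        by (subst lin_expand[OF linG], subst lin_expand[OF linI]) (simp add: GE sum_distrib_left mult_ac)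
      then show ?thesis using t0 by blast
    qed
    obtain T where T0: "\<And>x y. 0 \<le> T x y"
      and GT: "\<And>x y. G (x,y) = (\<lambda>\<rho> i j. complex_of_real (T x y) * I x \<rho> i j)"
    proof -
      assume a: "\<And>T. (\<And>x y. 0 \<le> T x y) \<Longrightarrow> (\<And>x y. G (x,y) = (\<lambda>\<rho> i j. complex_of_real (T x y) * I x \<rho> i j)) \<Longrightarrow> thesis"
      from exT have "\<forall>x y. \<exists>t. 0 \<le> t \<and> G (x,y) = (\<lambda>\<rho> i j. complex_of_real t * I x \<rho> i j)" by blast
      then have "\<exists>T. \<forall>x y. 0 \<le> T x y \<and> G (x,y) = (\<lambda>\<rho> i j. complex_of_real (T x y) * I x \<rho> i j)"
        by (intro choice allI) blast
      then show thesis using a by blast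
    qed
    define \<nu> where "\<nu> x y = (if I x = (\<lambda>\<rho> i j. 0) then 1 / real (card (UNIV :: 'y set)) else T x y)" for x y
    have G\<nu>: "G (x,y) = (\<lambda>\<rho> i j. complex_of_real (\<nu> x y) * I x \<rho> i j)" for x y
      using GT[of x y] by (auto simp: \<nu>_def)
    show "postproc_le B (induced_povm I)"
      unfolding postproc_le_def
    proof (intro exI[of _ \<nu>] conjI allI)
      fix x y show "0 \<le> \<nu> x y" using T0 by (simp add: \<nu>_def)
    next
      fix x
      show "(\<Sum>y\<in>UNIV. \<nu> x y) = 1"
      proof (cases "I x = (\<lambda>\<rho> i j. 0)")
        case True then show ?thesis by (simp add: \<nu>_def)
      next
        case False
        then obtain \<rho> i j where nz: "I x \<rho> i j \<noteq> 0" by (blast intro: ext)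
        have "I x \<rho> i j = (\<Sum>y\<in>UNIV. G (x,y) \<rho> i j)" by (subst marg[of x, symmetric]) (rule refl)
        also have "\<dots> = complex_of_real (\<Sum>y\<in>UNIV. T x y) * I x \<rho> i j"
          by (simp add: GT sum_distrib_right)
        finally have "complex_of_real (\<Sum>y\<in>UNIV. T x y) = 1" using nz by simp
        then have "(\<Sum>y\<in>UNIV. T x y) = 1" by (simp only: of_real_eq_1_iff)
        then show ?thesis using False by (simp add: \<nu>_def)
      qed
    next
      fix y
      have "B y = (\<lambda>i j. \<Sum>x\<in>UNIV. induced_povm G (x,y) i j)" using povm[of y] by simp
      also have "\<dots> = (\<lambda>i j. \<Sum>x\<in>UNIV. complex_of_real (\<nu> x y) * induced_povm I x i j)"
      proof -
        have "induced_povm G (x,y) = (\<lambda>i j. complex_of_real (\<nu> x y) * induced_povm I x i j)" for x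
          by (rule scaled_induced[where I=I and x=x and G=G and p="(x,y)" and c="\<nu> x y", OF linI[of x] G\<nu>[of x y]])
        then show ?thesis by simp
      qed
      finally show "B y = (\<lambda>i j. \<Sum>x\<in>UNIV. complex_of_real (\<nu> x y) * induced_povm I x i j)" .
    qed
  next
    assume "postproc_le B (induced_povm I)"
    then obtain \<nu> :: "'x \<Rightarrow> 'y \<Rightarrow> real" where
      \<nu>0: "\<And>x y. 0 \<le> \<nu> x y" and \<nu>1: "\<And>x. (\<Sum>y\<in>UNIV. \<nu> x y) = 1" and
      B\<nu>: "\<And>y. B y = (\<lambda>i j. \<Sum>x\<in>UNIV. complex_of_real (\<nu> x y) * induced_povm I x i j)"
      unfolding postproc_le_def by blast
    have \<nu>le: "\<nu> x y \<le> 1" for x y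
      using member_le_sum[of y UNIV "\<nu> x"] \<nu>0 \<nu>1[of x] by simp
    define G :: "'x \<times> 'y \<Rightarrow> ('h,'h) cmat \<Rightarrow> ('k,'k) cmat" where
      "G p = (\<lambda>\<rho> i j. complex_of_real (\<nu> (fst p) (snd p)) * I (fst p) \<rho> i j)" for p
    have margG: "(\<lambda>\<rho> i j. \<Sum>y\<in>UNIV. G (x,y) \<rho> i j) = I x" for x
    proof (intro ext)
      fix \<rho> i j
      have "(\<Sum>y\<in>UNIV. G (x,y) \<rho> i j) = complex_of_real (\<Sum>y\<in>UNIV. \<nu> x y) * I x \<rho> i j"
        by (simp add: G_def sum_distrib_right)
      then show "(\<Sum>y\<in>UNIV. G (x,y) \<rho> i j) = I x \<rho> i j" using \<nu>1 by simp
    qed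
    show "compatible I B"
      unfolding compatible_def
    proof (intro exI[of _ G] conjI allI)
      show "is_instrument G"
        unfolding is_instrument_def
      proof (intro conjI allI)
        fix p :: "'x \<times> 'y"
        show "completely_positive (G p)"
          unfolding G_def by (rule scaled_cp[OF cpI \<nu>0])
        show "trace_nonincreasing (G p)"
          unfolding trace_nonincreasing_def
        proof (intro allI impI)
          fix \<rho> :: "('h,'h) cmat" assume "psd \<rho>"
          have "tr (G p \<rho>) = complex_of_real (\<nu> (fst p) (snd p)) * tr (I (fst p) \<rho>)"
            by (simp add: G_def tr_scale)
          also have "\<dots> \<le> tr (I (fst p) \<rho>)"
            by (rule scale_le[OF trI[OF \<open>psd \<rho>\<close>] \<nu>0 \<nu>le])
          also have "\<dots> \<le> tr \<rho>"
            using assms(1) \<open>psd \<rho>\<close> unfolding is_instrument_def trace_nonincreasing_def by blast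
          finally show "tr (G p \<rho>) \<le> tr \<rho>" .
        qed
      next
        fix \<rho> :: "('h,'h) cmat"
        have "(\<lambda>i j. \<Sum>p\<in>UNIV. G p \<rho> i j) = (\<lambda>i j. \<Sum>x\<in>UNIV. \<Sum>y\<in>UNIV. G (x,y) \<rho> i j)"
          by (simp add: sum.cartesian_product UNIV_Times_UNIV[symmetric] case_prod_beta del: UNIV_Times_UNIV)
        also have "\<dots> = (\<lambda>i j. \<Sum>x\<in>UNIV. I x \<rho> i j)"
          using margG by (simp add: fun_eq_iff)
        finally show "tr (\<lambda>i j. \<Sum>p\<in>UNIV. G p \<rho> i j) = tr \<rho>"
          using assms(1) unfolding is_instrument_def by simp
      qed
    next
      fix x show "(\<lambda>\<rho> i j. \<Sum>y\<in>UNIV. G (x,y) \<rho> i j) = I x" by (rule margG)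
    next
      fix y
      have "induced_povm G (x,y) = (\<lambda>i j. complex_of_real (\<nu> x y) * induced_povm I x i j)" for x
        by (rule scaled_induced[where I=I and x=x and G=G and p="(x,y)" and c="\<nu> x y", OF linI[of x]]) (simp add: G_def)
      then show "(\<lambda>i j. \<Sum>x\<in>UNIV. induced_povm G (x,y) i j) = B y"
        by (simp add: B\<nu>)
    qed
  qed
qed

end
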